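(* Let $A,B\in\mathbb{Z}$ with $4A^3+27B^2\ne0$, let $M$ be a positive integer with $\max\{10\sqrt{|A|},5\sqrt[3]{|B|}\}\le M$, let $D$ be a squarefree positive integer and $E_D: y^2=x^3+D^2Ax+D^3B$. Let $P,Q\in E_D(\mathbb{Q})$ with $MD\le x(P)<x(Q)$ and $y(P)y(Q)<0$. Then for every real $\mu$ with $1<\mu\le x(Q)/x(P)$, \[x(P)\le x(P+Q)\le \frac{(2\mu+1)^2}{(\mu-1)^2}\,x(P).\] *)

theory Defs
  imports Complex_Main "HOL-Computational_Algebra.Squarefree"
begin

text \<open>Rational points of the short Weierstrass curve y^2 = x^3 + a x + b.
  A point is None (the point at infinity O) or Some (x, y) with (x, y) on the curve.\<close>

definition on_curve :: "rat \<Rightarrow> rat \<Rightarrow> rat \<Rightarrow> rat \<Rightarrow> bool" where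
  "on_curve a b x y \<longleftrightarrow> y ^ 2 = x ^ 3 + a * x + b"

definition ec_add :: "rat \<Rightarrow> (rat \<times> rat) option \<Rightarrow> (rat \<times> rat) option \<Rightarrow> (rat \<times> rat) option" where
  "ec_add a P Q =
    (case P of None \<Rightarrow> Q
     | Some (x1, y1) \<Rightarrow>
       (case Q of None \<Rightarrow> P
        | Some (x2, y2) \<Rightarrow>
          (if x1 = x2 \<and> y1 = - y2 then None
           else
             (let l = (if x1 = x2 then (3 * x1 ^ 2 + a) / (2 * y1) else (y2 - y1) / (x2 - x1));
                  x3 = l ^ 2 - x1 - x2
              in Some (x3, l * (x1 - x3) - y1)))))"

end

theory Submission
  imports Defs
begin

lemma key:
  fixes a b s w yP yQ :: rat
  assumes s0: "s > 0" and sw: "s < w"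
    and ha: "100 * \<bar>a\<bar> \<le> s^2" and hb: "125 * \<bar>b\<bar> \<le> s^3"
    and P: "yP^2 = s^3 + a*s + b" and Q: "yQ^2 = w^3 + a*w + b"
    and yn: "yP * yQ < 0"
  shows "s * (w-s)^2 \<le> (s*w+a)*(s+w) + 2*b - 2*yP*yQ"
    and "(s*w+a)*(s+w) + 2*b - 2*yP*yQ \<le> s*(2*w+s)^2"
proof -
  have w0: "w > 0" using s0 sw by linarith
  have aa: "\<bar>a*s\<bar> \<le> s^3/100" using ha s0 by (simp add: abs_mult power3_eq_cube power2_eq_square)
  have aw: "\<bar>a*w\<bar> \<le> s^2*w/100" using ha w0 by (simp add: abs_mult)
  have la1: "- (s^3/100) \<le> a*s" "a*s \<le> s^3/100" using aa by linarith+
  have la2: "- (s^2*w/100) \<le> a*w" "a*w \<le> s^2*w/100" using aw by linarith+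
  have lb: "- (s^3/125) \<le> b" "b \<le> s^3/125" using hb by linarith+
  have ss: "s^3 \<le> s^2*w" using sw s0 by (simp add: power3_eq_cube power2_eq_square)
  have s2w: "s^2*w \<le> s*w^2" using sw s0 by (simp add: power2_eq_square)
  have w2: "s*w^2 \<le> w^3" using sw s0 w0 by (simp add: power2_eq_square power3_eq_cube)
  have pos: "s^3 > 0" using s0 by simp
  have p1: "s*w^2 > 0" "s^2*w > 0" using s0 w0 by simp_all
  have e1: "s * (w-s)^2 = s*w^2 - 2*(s^2*w) + s^3" by (simp add: power2_eq_square power3_eq_cube algebra_simps)
  have e2: "(s*w+a)*(s+w) = s^2*w + s*w^2 + a*s + a*w" by (simp add: power2_eq_square algebra_simps)
  show "s * (w-s)^2 \<le> (s*w+a)*(s+w) + 2*b - 2*yP*yQ"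
    unfolding e1 e2 using la1 la2 lb ss yn pos by linarith
  define R where "R = s*(2*w+s)^2 - ((s*w+a)*(s+w) + 2*b)"
  have Rexp: "R = 3*(s*w^2) + 3*(s^2*w) + s^3 - a*s - a*w - 2*b"
    unfolding R_def by (simp add: power2_eq_square power3_eq_cube algebra_simps)
  have Rge: "R \<ge> 3*(s*w^2) + 2*(s^2*w)" using Rexp la1 la2 lb ss pos by linarith
  have fs: "yP^2 \<le> 2 * s^3" using P la1 lb pos by linarith
  have fw: "yQ^2 \<le> 2 * w^3" using Q la2 lb ss s2w w2 pos by linarith
  have "(2*yP*yQ)^2 = 4 * yP^2 * yQ^2" by (simp add: power_mult_distrib)
  also have "\<dots> \<le> 4 * (2*s^3) * (2*w^3)"
  proof -
    have "yP^2 * yQ^2 \<le> (2*s^3) * (2*w^3)" using fs fw s0 by (intro mult_mono) auto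
    then show ?thesis by simp
  qed
  also have "\<dots> = 16 * (s*w)^3" by (simp add: power_mult_distrib)
  also have "\<dots> \<le> (3*(s*w^2) + 2*(s^2*w))^2"
  proof -
    have E1: "(3*(s*w^2) + 2*(s^2*w))^2 = (s*w)^2 * (3*w+2*s)^2" by (simp add: power2_eq_square algebra_simps)
    have E2: "16*(s*w)^3 = (s*w)^2 * (16*(s*w))" by (simp add: power2_eq_square power3_eq_cube algebra_simps)
    have E3: "16*(s*w) \<le> (3*w+2*s)^2"
    proof -
      have "s*w \<le> w*w" using sw s0 by simp
      have "(3*w+2*s)^2 = 9*(w*w) + 12*(s*w) + 4*(s*s)" by (simp add: power2_eq_square algebra_simps)
      moreover have "s*s \<ge> 0" "s*w > 0" using s0 w0 by simp_all
      ultimately show ?thesis using \<open>s*w \<le> w*w\<close> by linarith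
    qed
    have "(s*w)^2 * (16*(s*w)) \<le> (s*w)^2 * (3*w+2*s)^2"
      using E3 by (rule mult_left_mono) simp
    then show ?thesis by (simp only: E1 E2)
  qed
  also have "\<dots> \<le> R^2"
    by (rule power_mono) (use Rge p1 in linarith)+
  finally have sq: "(2*yP*yQ)^2 \<le> R^2" .
  have R0: "R \<ge> 0" using Rge p1 by linarith
  have "\<bar>2*yP*yQ\<bar> \<le> R"
    using power2_le_imp_le[of "\<bar>2*yP*yQ\<bar>" R] sq R0 by simp
  then show "(s*w+a)*(s+w) + 2*b - 2*yP*yQ \<le> s*(2*w+s)^2" unfolding R_def by linarith
qed


lemma lin_frac:
  fixes X Y mu :: real
  assumes X0: "X > 0" and XY: "X < Y" and m1: "1 < mu" and m2: "mu \<le> Y / X"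
  shows "(2*Y+X)/(Y-X) \<le> (2*mu+1)/(mu-1)"
proof -
  have "mu * X \<le> Y" using m2 X0 by (simp add: le_divide_eq)
  then have "(2*Y+X)*(mu-1) \<le> (2*mu+1)*(Y-X)" by (simp add: algebra_simps)
  then show ?thesis using XY m1 by (simp add: divide_le_eq le_divide_eq mult.commute)
qed

theorem lemma3p7:
  fixes A B M D :: int and xP yP xQ yQ :: rat and \<mu> :: real
  assumes disc: "4 * A ^ 3 + 27 * B ^ 2 \<noteq> 0"
    and Mpos: "M > 0"
    and Mbound: "max (10 * sqrt \<bar>real_of_int A\<bar>) (5 * root 3 \<bar>real_of_int B\<bar>) \<le> real_of_int M"
    and Dsq: "squarefree D" and Dpos: "D > 0"
    and P_on: "on_curve (of_int (D ^ 2 * A)) (of_int (D ^ 3 * B)) xP yP"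
    and Q_on: "on_curve (of_int (D ^ 2 * A)) (of_int (D ^ 3 * B)) xQ yQ"
    and MD_le: "of_int (M * D) \<le> xP"
    and xlt: "xP < xQ"
    and yneg: "yP * yQ < 0"
    and mu1: "1 < \<mu>"
    and mu2: "\<mu> \<le> real_of_rat xQ / real_of_rat xP"
  shows "\<exists>x3 y3. ec_add (of_int (D ^ 2 * A)) (Some (xP, yP)) (Some (xQ, yQ)) = Some (x3, y3)
           \<and> xP \<le> x3
           \<and> real_of_rat x3 \<le> (2 * \<mu> + 1) ^ 2 / (\<mu> - 1) ^ 2 * real_of_rat xP"
proof -
  define a :: rat where "a = of_int (D ^ 2 * A)"
  define b :: rat where "b = of_int (D ^ 3 * B)"
  have hA: "100 * \<bar>A\<bar> \<le> M^2"
  proof -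
    have "10 * sqrt \<bar>real_of_int A\<bar> \<le> real_of_int M" using Mbound by simp
    then have "(10 * sqrt \<bar>real_of_int A\<bar>)^2 \<le> (real_of_int M)^2"
      by (intro power_mono) auto
    then have "real_of_int (100 * \<bar>A\<bar>) \<le> real_of_int (M^2)" by (simp add: power_mult_distrib)
    then show ?thesis by linarith
  qed
  have hB: "125 * \<bar>B\<bar> \<le> M^3"
  proof -
    have "5 * root 3 \<bar>real_of_int B\<bar> \<le> real_of_int M" using Mbound by simp
    then have "(5 * root 3 \<bar>real_of_int B\<bar>)^3 \<le> (real_of_int M)^3"
      by (intro power_mono) auto
    moreover have "(root 3 \<bar>real_of_int B\<bar>)^3 = \<bar>real_of_int B\<bar>" by (simp add: real_root_pow_pos2)
    ultimately have "real_of_int (125 * \<bar>B\<bar>) \<le> real_of_int (M^3)" by (simp add: power_mult_distrib)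
    then show ?thesis by linarith
  qed
  have MD0: "M * D > 0" using Mpos Dpos by simp
  have MDq: "(0::rat) < of_int (M*D)" using MD0 by (simp only: of_int_0_less_iff)
  then have s0: "xP > 0" using MD_le by linarith
  have ha: "100 * \<bar>a\<bar> \<le> xP^2"
  proof -
    have "D^2 * (100 * \<bar>A\<bar>) \<le> D^2 * M^2" using hA by (intro mult_left_mono) auto
    moreover have "100 * \<bar>D^2 * A\<bar> = D^2 * (100 * \<bar>A\<bar>)" by (simp add: abs_mult)
    moreover have "(M*D)^2 = D^2 * M^2" by (simp add: power_mult_distrib)
    ultimately have "100 * \<bar>D^2 * A\<bar> \<le> (M*D)^2" by simp
    then have "of_int (100 * \<bar>D^2 * A\<bar>) \<le> (of_int (M*D) :: rat)^2"
      by (metis of_int_le_iff of_int_power)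
    moreover have "(of_int (M*D) :: rat)^2 \<le> xP^2" by (rule power_mono[OF MD_le]) (use MDq in linarith)
    ultimately show ?thesis unfolding a_def by simp
  qed
  have hb: "125 * \<bar>b\<bar> \<le> xP^3"
  proof -
    have "D^3 * (125 * \<bar>B\<bar>) \<le> D^3 * M^3" using hB Dpos by (intro mult_left_mono) auto
    moreover have "125 * \<bar>D^3 * B\<bar> = D^3 * (125 * \<bar>B\<bar>)" using Dpos by (simp add: abs_mult)
    moreover have "(M*D)^3 = D^3 * M^3" by (simp add: power_mult_distrib)
    ultimately have "125 * \<bar>D^3 * B\<bar> \<le> (M*D)^3" by simp
    then have "of_int (125 * \<bar>D^3 * B\<bar>) \<le> (of_int (M*D) :: rat)^3"
      by (metis of_int_le_iff of_int_power)
    moreover have "(of_int (M*D) :: rat)^3 \<le> xP^3" by (rule power_mono[OF MD_le]) (use MDq in linarith)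
    ultimately show ?thesis unfolding b_def by simp
  qed
  have P: "yP^2 = xP^3 + a*xP + b" using P_on unfolding on_curve_def a_def b_def by simp
  have Q: "yQ^2 = xQ^3 + a*xQ + b" using Q_on unfolding on_curve_def a_def b_def by simp
  define x3 where "x3 = ((yQ - yP)/(xQ - xP))^2 - xP - xQ"
  define y3 where "y3 = ((yQ - yP)/(xQ - xP)) * (xP - x3) - yP"
  have d0: "xQ - xP \<noteq> 0" using xlt by simp
  have ne: "xP \<noteq> xQ" using xlt by simp
  have add: "ec_add a (Some (xP, yP)) (Some (xQ, yQ)) = Some (x3, y3)"
    using ne unfolding ec_add_def x3_def y3_def Let_def by simp
  have ident: "x3 * (xQ - xP)^2 = (xP*xQ+a)*(xP+xQ) + 2*b - 2*yP*yQ"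
  proof -
    have l: "((yQ - yP)/(xQ - xP)) * (xQ - xP) = yQ - yP" using d0 by simp
    have "x3 * (xQ - xP)^2 = (((yQ - yP)/(xQ - xP)) * (xQ - xP))^2 - (xP + xQ) * (xQ - xP)^2"
      unfolding x3_def by (simp only: power_mult_distrib left_diff_distrib distrib_right)
    also have "\<dots> = (yQ - yP)^2 - (xP + xQ) * (xQ - xP)^2" by (simp only: l)
    finally have "x3 * (xQ - xP)^2 = (yQ - yP)^2 - (xP + xQ) * (xQ - xP)^2" .
    also have "\<dots> = yQ^2 + yP^2 - 2*yP*yQ - (xP + xQ) * (xQ - xP)^2"
      by (simp add: power2_eq_square algebra_simps)
    also have "\<dots> = (xP*xQ+a)*(xP+xQ) + 2*b - 2*yP*yQ"
      unfolding P Q by (simp add: power2_eq_square power3_eq_cube ring_distribs)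
    finally show ?thesis .
  qed
  note K = key[OF s0 xlt ha hb P Q yneg]
  have sq0: "(xQ - xP)^2 > 0" using d0 by simp
  have low: "xP \<le> x3"
  proof -
    have "xP * (xQ - xP)^2 \<le> x3 * (xQ - xP)^2" using K(1) ident by simp
    then show ?thesis using sq0 by simp
  qed
  have up: "x3 * (xQ - xP)^2 \<le> xP * (2*xQ + xP)^2" using K(2) ident by simp
  define X where "X = real_of_rat xP"
  define Y where "Y = real_of_rat xQ"
  define Z where "Z = real_of_rat x3"
  have X0: "X > 0" using s0 unfolding X_def by simp
  have XY: "X < Y" using xlt unfolding X_def Y_def by (simp add: of_rat_less)
  have upr: "Z * (Y - X)^2 \<le> X * (2*Y + X)^2"
  proof -
    have "real_of_rat (x3 * (xQ - xP)^2) \<le> real_of_rat (xP * (2*xQ + xP)^2)"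
      using up by (simp only: of_rat_less_eq)
    then show ?thesis unfolding X_def Y_def Z_def by (simp add: of_rat_mult of_rat_power of_rat_add of_rat_diff)
  qed
  have q0: "(Y - X)^2 > 0" using XY by simp
  have "Z \<le> X * ((2*Y + X)/(Y - X))^2"
    using upr q0 by (simp add: power_divide le_divide_eq)
  also have "\<dots> \<le> X * ((2*\<mu>+1)/(\<mu>-1))^2"
  proof -
    have f: "(2*Y+X)/(Y-X) \<le> (2*\<mu>+1)/(\<mu>-1)"
      using lin_frac[OF X0 XY mu1] mu2 unfolding X_def Y_def by simp
    have "0 \<le> (2*Y+X)/(Y-X)" using X0 XY by simp
    then have "((2*Y+X)/(Y-X))^2 \<le> ((2*\<mu>+1)/(\<mu>-1))^2" using f by (intro power_mono)
    then show ?thesis using X0 by simp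
  qed
  finally have "Z \<le> (2 * \<mu> + 1) ^ 2 / (\<mu> - 1) ^ 2 * X" by (simp add: power_divide mult.commute)
  then show ?thesis using add low unfolding a_def Z_def X_def by blast
qed

end
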